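(* Assume $\epsilon=0$ and the following hold: (A1) for every $z\in\mathcal{Z}$ the map $x\mapsto l(x,z)$ is $\gamma$-strongly convex on $\mathbb{R}^n$ for some $\gamma>0$; (A2) for every $x$, $\|\nabla_x l(x,z)-\nabla_x l(x,z')\|\le\beta_z\|z-z'\|$ for all $z,z'\in\mathcal{Z}$, and for every $z\in\mathcal{Z}$, $\|\nabla_x l(x,z)-\nabla_x l(y,z)\|\le\beta_x\|x-y\|$ for all $x,y\in\mathbb{R}^n$; (A3) $W_1(\mathcal{D}(x),\mathcal{D}(y))\le\epsilon\|x-y\|$ and $W_1(\mathcal{D}_g(x),\mathcal{D}_g(y))\le\epsilon_g\|x-y\|$ for all $x,y\in\mathbb{R}^n$; (A4) $G$ has full row rank. Let $L_{x^*}:=\sqrt{\frac{\beta_x}{\gamma\,\lambda_{\min}(GG^{\mathrm T})}}$. If $L_{x^*}\epsilon_g<1$, then the problem $\min_x f_x(x)$ s.t. $Gx\le\xi(x)$ admits a unique constrained equilibrium point $x_s$, and for every initial point $x_0$ the sequence generated by Repeated Constrained Minimization converges to $x_s$ at a linear rate.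
   Context: Let $G\in\mathbb{R}^{d_w\times n}$ and let $l:\mathbb{R}^n\times\mathbb{R}^{d_z}\to\mathbb{R}$ be twice continuously differentiable. Let $\mathcal{Z}\subseteq\mathbb{R}^{d_z}$, $\mathcal{W}\subseteq\mathbb{R}^{d_w}$, and let $\mathcal{D},\mathcal{D}_g$ be maps assigning to each $x\in\mathbb{R}^n$ probability distributions $\mathcal{D}(x)$ on $\mathcal{Z}$ and $\mathcal{D}_g(x)$ on $\mathcal{W}$ (with measurability so that all expectations are well defined). For $x,x'\in\mathbb{R}^n$ put $f_{x'}(x)=\mathbb{E}_{z\sim\mathcal{D}(x')}[l(x,z)]$ and $\xi(x')=\mathbb{E}_{w\sim\mathcal{D}_g(x')}[w]\in\mathbb{R}^{d_w}$; inequalities between vectors are componentwise. A constrained equilibrium point is a vector $x_s$ such that $x_s=\arg\min_x\{f_{x_s}(x): Gx\le\xi(x_s)\}$. Repeated Constrained Minimization (RCM) starts from $x_0$ and iterates $x_{t+1}=\arg\min_x\{f_{x_t}(x): Gx\le\xi(x_t)\}$ for $t=0,1,2,\dots$. $W_1$ denotes the 1-Wasserstein (earth mover's) distance, $\|\cdot\|$ the Euclidean norm, and $\lambda_{\min}$ the smallest eigenvalue. The condition $\epsilon=0$ means the distribution in the objective does not depend on the decision. *)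

theory Defs
  imports "HOL-Analysis.Analysis" "HOL-Probability.Probability"
begin

text \<open>gamma-strong convexity of a real function on a set S (standard definition).\<close>
definition strongly_convex_on :: "'a::real_normed_vector set \<Rightarrow> real \<Rightarrow> ('a \<Rightarrow> real) \<Rightarrow> bool" where
  "strongly_convex_on S \<gamma> f \<longleftrightarrow> convex S \<and>
     (\<forall>x\<in>S. \<forall>y\<in>S. \<forall>t\<in>{0..1}.
        f ((1 - t) *\<^sub>R x + t *\<^sub>R y) \<le> (1 - t) * f x + t * f y - \<gamma> / 2 * t * (1 - t) * (norm (x - y))\<^sup>2)"

text \<open>Twice continuously differentiable on the whole space (C^2): the Frechet derivative
  exists everywhere and is itself everywhere Frechet differentiable with continuous derivative.\<close>
definition twice_cont_diff :: "('a::real_normed_vector \<Rightarrow> real) \<Rightarrow> bool" where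
  "twice_cont_diff f \<longleftrightarrow>
     (\<exists>(f' :: 'a \<Rightarrow> 'a \<Rightarrow>\<^sub>L real) (f'' :: 'a \<Rightarrow> 'a \<Rightarrow>\<^sub>L ('a \<Rightarrow>\<^sub>L real)).
        (\<forall>p. (f has_derivative blinfun_apply (f' p)) (at p)) \<and>
        (\<forall>p. (f' has_derivative blinfun_apply (f'' p)) (at p)) \<and>
        continuous_on UNIV f'')"

text \<open>Couplings of two probability measures on (the Borel sets of) a Euclidean space.\<close>
definition couplings :: "'a::euclidean_space measure \<Rightarrow> 'a measure \<Rightarrow> ('a \<times> 'a) measure set" where
  "couplings \<mu> \<nu> = {\<pi>. sets \<pi> = sets borel \<and> prob_space \<pi> \<and>
                        distr \<pi> borel fst = \<mu> \<and> distr \<pi> borel snd = \<nu>}"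

text \<open>1-Wasserstein (earth mover's) distance, valued in [0, \<infinity>].\<close>
definition W1 :: "'a::euclidean_space measure \<Rightarrow> 'a measure \<Rightarrow> ennreal" where
  "W1 \<mu> \<nu> = (INF \<pi>\<in>couplings \<mu> \<nu>. \<integral>\<^sup>+ p. ennreal (dist (fst p) (snd p)) \<partial>\<pi>)"

text \<open>Smallest eigenvalue of a (real square) matrix.\<close>
definition lambda_min :: "real^'n^'n \<Rightarrow> real" where
  "lambda_min A = Min {e. \<exists>v. v \<noteq> 0 \<and> A *v v = e *\<^sub>R v}"

text \<open>f_{x'}(x) = E_{z ~ D(x')} l(x,z)\<close>
definition obj :: "('x \<Rightarrow> 'z measure) \<Rightarrow> ('x \<Rightarrow> 'z \<Rightarrow> real) \<Rightarrow> 'x \<Rightarrow> 'x \<Rightarrow> real" where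
  "obj D l x' x = (\<integral>z. l x z \<partial>(D x'))"

text \<open>xi(x') = E_{w ~ D_g(x')} w\<close>
definition xi :: "('x \<Rightarrow> 'w::{banach, second_countable_topology} measure) \<Rightarrow> 'x \<Rightarrow> 'w" where
  "xi Dg x' = (\<integral>w. w \<partial>(Dg x'))"

text \<open>Constrained equilibrium point: x_s = argmin { f_{x_s}(x) : G x \<le> xi(x_s) }.\<close>
definition constrained_equilibrium ::
  "((real^'n) \<Rightarrow> 'z measure) \<Rightarrow> ((real^'n) \<Rightarrow> 'z \<Rightarrow> real) \<Rightarrow> real^'n^'m
     \<Rightarrow> ((real^'n) \<Rightarrow> (real^'m) measure) \<Rightarrow> real^'n \<Rightarrow> bool" where
  "constrained_equilibrium D l G Dg xs \<longleftrightarrow>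
     xs = arg_min (obj D l xs) (\<lambda>x. G *v x \<le> xi Dg xs)"

text \<open>Repeated Constrained Minimization iterates.\<close>
primrec RCM :: "((real^'n) \<Rightarrow> 'z measure) \<Rightarrow> ((real^'n) \<Rightarrow> 'z \<Rightarrow> real) \<Rightarrow> real^'n^'m
     \<Rightarrow> ((real^'n) \<Rightarrow> (real^'m) measure) \<Rightarrow> real^'n \<Rightarrow> nat \<Rightarrow> real^'n" where
  "RCM D l G Dg x0 0 = x0"
| "RCM D l G Dg x0 (Suc t) =
     (let xt = RCM D l G Dg x0 t in arg_min (obj D l xt) (\<lambda>x. G *v x \<le> xi Dg xt))"

end

theory Submission
  imports Defs
begin

lemma line_deriv:
  fixes f :: "'a::real_inner \<Rightarrow> real"
  assumes "GDERIV f (x + t *\<^sub>R v) :> g"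
  shows "((\<lambda>s. f (x + s *\<^sub>R v)) has_real_derivative (inner g v)) (at t)"
proof -
  have d1: "((\<lambda>s. x + s *\<^sub>R v) has_derivative (\<lambda>s. s *\<^sub>R v)) (at t)"
    by (auto intro!: derivative_eq_intros)
  have d2: "(f has_derivative (\<lambda>h. inner h g)) (at (x + t *\<^sub>R v))"
    using assms by (simp add: gderiv_def)
  have "((\<lambda>s. f (x + s *\<^sub>R v)) has_derivative (\<lambda>s. inner (s *\<^sub>R v) g)) (at t)"
    using has_derivative_compose[OF d1 d2] by simp
  moreover have "(\<lambda>s. inner (s *\<^sub>R v) g) = (*) (inner g v)"
    by (auto simp: inner_commute)
  ultimately show ?thesis by (simp add: has_field_derivative_def)
qed

lemma upper_quad:
  fixes f :: "'a::real_inner \<Rightarrow> real"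
  assumes d: "\<And>x. GDERIV f x :> g x"
    and L: "\<And>x y. norm (g x - g y) \<le> \<beta> * norm (x - y)"
  shows "f (y + v) \<le> f y + inner (g y) v + \<beta> / 2 * (norm v)\<^sup>2"
proof -
  define \<phi> where "\<phi> t = f (y + t *\<^sub>R v) - t * inner (g y) v - \<beta> / 2 * t\<^sup>2 * (norm v)\<^sup>2" for t
  have D: "(\<phi> has_real_derivative (inner (g (y + t *\<^sub>R v)) v - inner (g y) v - \<beta> * t * (norm v)\<^sup>2)) (at t)" for t
    unfolding \<phi>_def
    by (rule line_deriv[OF d] derivative_eq_intros refl | simp)+
  have "\<phi> 1 \<le> \<phi> 0"
  proof (rule DERIV_nonpos_imp_nonincreasing[of 0 1 \<phi>])
    fix t :: real assume t: "0 \<le> t" "t \<le> 1"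
    have "inner (g (y + t *\<^sub>R v)) v - inner (g y) v = inner (g (y + t *\<^sub>R v) - g y) v"
      by (simp add: inner_diff_left)
    also have "\<dots> \<le> norm (g (y + t *\<^sub>R v) - g y) * norm v"
      by (rule norm_cauchy_schwarz)
    also have "\<dots> \<le> \<beta> * norm (t *\<^sub>R v) * norm v"
      using L[of "y + t *\<^sub>R v" y] by (simp add: mult_right_mono)
    also have "\<dots> = \<beta> * t * (norm v)\<^sup>2" using t by (simp add: power2_eq_square)
    finally show "\<exists>y. DERIV \<phi> t :> y \<and> y \<le> 0" using D[of t] by force
  qed simp
  then show ?thesis by (simp add: \<phi>_def)
qed

lemma lower_quad:
  fixes f :: "'a::real_inner \<Rightarrow> real"
  assumes d: "\<And>x. GDERIV f x :> g x" and sc: "strongly_convex_on UNIV \<gamma> f"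
  shows "f y + inner (g y) v + \<gamma> / 2 * (norm v)\<^sup>2 \<le> f (y + v)"
proof -
  define \<phi> where "\<phi> s = f (y + s *\<^sub>R v)" for s
  have D: "(\<phi> has_real_derivative (inner (g y) v)) (at 0 within {0<..})"
    unfolding \<phi>_def using line_deriv[of f y 0 v "g y"] d
    by (auto intro: has_field_derivative_at_within)
  hence lim: "((\<lambda>s. (\<phi> s - \<phi> 0) / (s - 0)) \<longlongrightarrow> inner (g y) v) (at_right 0)"
    by (simp add: has_field_derivative_iff)
  have lim2: "((\<lambda>s. f (y + v) - f y - \<gamma> / 2 * (1 - s) * (norm v)\<^sup>2) \<longlongrightarrow> f (y + v) - f y - \<gamma> / 2 * (1 - 0) * (norm v)\<^sup>2) (at_right 0)"
    by (intro tendsto_intros)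
  have ev: "eventually (\<lambda>s. (\<phi> s - \<phi> 0) / (s - 0) \<le> f (y + v) - f y - \<gamma> / 2 * (1 - s) * (norm v)\<^sup>2) (at_right (0::real))"
  proof (rule eventually_at_rightI[of 0 1])
    fix s :: real assume "s \<in> {0<..<1}"
    hence s: "0 < s" "s < 1" by auto
    have "f ((1 - s) *\<^sub>R y + s *\<^sub>R (y + v)) \<le> (1 - s) * f y + s * f (y + v) - \<gamma> / 2 * s * (1 - s) * (norm (y - (y + v)))\<^sup>2"
    proof -
      have H: "\<And>a b t. t \<in> {0..1} \<Longrightarrow> f ((1 - t) *\<^sub>R a + t *\<^sub>R b) \<le> (1 - t) * f a + t * f b - \<gamma> / 2 * t * (1 - t) * (norm (a - b))\<^sup>2"
        using sc unfolding strongly_convex_on_def by blast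
      show ?thesis using H[of s y "y + v"] s by simp
    qed
    moreover have "(1 - s) *\<^sub>R y + s *\<^sub>R (y + v) = y + s *\<^sub>R v" by (simp add: algebra_simps)
    ultimately have "\<phi> s - \<phi> 0 \<le> s * (f (y + v) - f y - \<gamma> / 2 * (1 - s) * (norm v)\<^sup>2)"
      by (simp add: \<phi>_def algebra_simps)
    then show "(\<phi> s - \<phi> 0) / (s - 0) \<le> f (y + v) - f y - \<gamma> / 2 * (1 - s) * (norm v)\<^sup>2"
      using s by (simp add: divide_le_eq mult.commute)
  qed simp
  have "inner (g y) v \<le> f (y + v) - f y - \<gamma> / 2 * (1 - 0) * (norm v)\<^sup>2"
    by (rule tendsto_le[OF trivial_limit_at_right_real lim2 lim ev])
  then show ?thesis by simp
qed

lemma z_lip: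
  fixes l :: "'a::real_inner \<Rightarrow> 'z \<Rightarrow> real"
  assumes d: "\<And>x z. GDERIV (\<lambda>x. l x z) x :> gradl x z"
    and L: "\<And>x. norm (gradl x z - gradl x z') \<le> c"
  shows "\<bar>(l y z - l y' z) - (l y z' - l y' z')\<bar> \<le> c * norm (y - y')"
proof -
  define \<psi> where "\<psi> t = l (y' + t *\<^sub>R (y - y')) z - l (y' + t *\<^sub>R (y - y')) z'" for t
  have D: "(\<psi> has_real_derivative (inner (gradl (y' + t *\<^sub>R (y - y')) z) (y - y') - inner (gradl (y' + t *\<^sub>R (y - y')) z') (y - y'))) (at t)" for t
    unfolding \<psi>_def
    by (intro DERIV_diff line_deriv d)
  obtain t where "\<psi> 1 - \<psi> 0 = (1 - 0) * (inner (gradl (y' + t *\<^sub>R (y - y')) z) (y - y') - inner (gradl (y' + t *\<^sub>R (y - y')) z') (y - y'))"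
    using MVT2[of 0 1 \<psi>] D by force
  hence "\<bar>\<psi> 1 - \<psi> 0\<bar> = \<bar>inner (gradl (y' + t *\<^sub>R (y - y')) z - gradl (y' + t *\<^sub>R (y - y')) z') (y - y')\<bar>"
    by (simp add: inner_diff_left)
  also have "\<dots> \<le> norm (gradl (y' + t *\<^sub>R (y - y')) z - gradl (y' + t *\<^sub>R (y - y')) z') * norm (y - y')"
    by (rule Cauchy_Schwarz_ineq2)
  also have "\<dots> \<le> c * norm (y - y')" by (intro mult_right_mono L) simp
  finally show ?thesis by (simp add: \<psi>_def algebra_simps)
qed

lemma coupling_bound:
  fixes g :: "'a::euclidean_space \<Rightarrow> 'b::{banach,second_countable_topology}"
  assumes \<pi>: "\<pi> \<in> couplings \<mu> \<nu>"
    and gi1: "integrable \<mu> g" and gi2: "integrable \<nu> g"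
    and AE1: "AE z in \<mu>. z \<in> Z" and AE2: "AE z in \<nu>. z \<in> Z"
    and c: "0 \<le> c" and L: "\<And>z z'. z \<in> Z \<Longrightarrow> z' \<in> Z \<Longrightarrow> norm (g z - g z') \<le> c * dist z z'"
  shows "ennreal (norm ((\<integral>z. g z \<partial>\<mu>) - (\<integral>z. g z \<partial>\<nu>))) \<le> ennreal c * (\<integral>\<^sup>+p. ennreal (dist (fst p) (snd p)) \<partial>\<pi>)"
proof -
  have s\<pi>: "sets \<pi> = sets borel" and \<mu>: "\<mu> = distr \<pi> borel fst" and \<nu>: "\<nu> = distr \<pi> borel snd"
    using \<pi> unfolding couplings_def by auto
  have mf: "fst \<in> measurable \<pi> borel"
    using measurable_cong_sets[OF s\<pi> refl] borel_measurable_continuous_onI[OF continuous_on_fst[OF continuous_on_id]]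
    by blast
  have ms: "snd \<in> measurable \<pi> borel"
    using measurable_cong_sets[OF s\<pi> refl] borel_measurable_continuous_onI[OF continuous_on_snd[OF continuous_on_id]]
    by blast
  have gm: "g \<in> borel_measurable borel"
    using borel_measurable_integrable[OF gi1] measurable_cong_sets[of \<mu> borel] \<mu> by simp
  have i1: "integrable \<pi> (\<lambda>p. g (fst p))"
    using gi1 \<mu> integrable_distr_eq[OF mf gm] by simp
  have i2: "integrable \<pi> (\<lambda>p. g (snd p))"
    using gi2 \<nu> integrable_distr_eq[OF ms gm] by simp
  have e1: "(\<integral>z. g z \<partial>\<mu>) = (\<integral>p. g (fst p) \<partial>\<pi>)"
    using \<mu> integral_distr[OF mf gm] by simp
  have e2: "(\<integral>z. g z \<partial>\<nu>) = (\<integral>p. g (snd p) \<partial>\<pi>)"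
    using \<nu> integral_distr[OF ms gm] by simp
  have A1: "AE p in \<pi>. fst p \<in> Z" using AE1 unfolding \<mu> by (rule AE_distrD[OF mf])
  have A2: "AE p in \<pi>. snd p \<in> Z" using AE2 unfolding \<nu> by (rule AE_distrD[OF ms])
  have dm: "(\<lambda>p. ennreal (dist (fst p) (snd p))) \<in> borel_measurable \<pi>"
  proof -
    have "(\<lambda>p. dist (fst p) (snd p)) \<in> borel_measurable borel"
      by (intro borel_measurable_continuous_onI continuous_intros)
    hence [measurable]: "(\<lambda>p. dist (fst p) (snd p)) \<in> borel_measurable \<pi>"
      using measurable_cong_sets[OF s\<pi> refl] by blast
    show ?thesis by measurable
  qed
  have "ennreal (norm ((\<integral>z. g z \<partial>\<mu>) - (\<integral>z. g z \<partial>\<nu>))) = ennreal (norm (\<integral>p. g (fst p) - g (snd p) \<partial>\<pi>))"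
    using e1 e2 i1 i2 by simp
  also have "\<dots> \<le> (\<integral>\<^sup>+p. norm (g (fst p) - g (snd p)) \<partial>\<pi>)"
    by (rule integral_norm_bound_ennreal) (intro Bochner_Integration.integrable_diff i1 i2)
  also have "\<dots> \<le> (\<integral>\<^sup>+p. ennreal c * ennreal (dist (fst p) (snd p)) \<partial>\<pi>)"
    using A1 A2 by (intro nn_integral_mono_AE) (auto simp: L c ennreal_mult[symmetric] ennreal_leI)
  also have "\<dots> = ennreal c * (\<integral>\<^sup>+p. ennreal (dist (fst p) (snd p)) \<partial>\<pi>)"
    by (rule nn_integral_cmult[OF dm])
  finally show ?thesis .
qed

lemma ennreal_cancel_le: "0 < (c::real) \<Longrightarrow> ennreal c * x \<le> ennreal c * y \<Longrightarrow> x \<le> y"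
  by (smt (verit, best) Groups.mult_ac(2) ennreal_0 ennreal_le_iff2
    mult_left_mono mult_right_ennreal_cancel nle_le)

lemma W1_bound:
  fixes g :: "'a::euclidean_space \<Rightarrow> 'b::{banach,second_countable_topology}"
  assumes gi1: "integrable \<mu> g" and gi2: "integrable \<nu> g"
    and AE1: "AE z in \<mu>. z \<in> Z" and AE2: "AE z in \<nu>. z \<in> Z"
    and c: "0 < c" and L: "\<And>z z'. z \<in> Z \<Longrightarrow> z' \<in> Z \<Longrightarrow> norm (g z - g z') \<le> c * dist z z'"
  shows "ennreal (norm ((\<integral>z. g z \<partial>\<mu>) - (\<integral>z. g z \<partial>\<nu>))) \<le> ennreal c * W1 \<mu> \<nu>"
proof -
  define a where "a = norm ((\<integral>z. g z \<partial>\<mu>) - (\<integral>z. g z \<partial>\<nu>)) / c"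
  have na: "ennreal (norm ((\<integral>z. g z \<partial>\<mu>) - (\<integral>z. g z \<partial>\<nu>))) = ennreal c * ennreal a"
    using c by (simp add: a_def ennreal_mult[symmetric])
  have "ennreal a \<le> (\<integral>\<^sup>+p. ennreal (dist (fst p) (snd p)) \<partial>\<pi>)"
    if "\<pi> \<in> couplings \<mu> \<nu>" for \<pi>
  proof (rule ennreal_cancel_le[OF c])
    show "ennreal c * ennreal a \<le> ennreal c * (\<integral>\<^sup>+p. ennreal (dist (fst p) (snd p)) \<partial>\<pi>)"
      using coupling_bound[OF that gi1 gi2 AE1 AE2 less_imp_le[OF c] L] unfolding na .
  qed
  hence "ennreal a \<le> W1 \<mu> \<nu>" unfolding W1_def by (rule INF_greatest)
  thus ?thesis unfolding na by (rule mult_left_mono) simp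
qed

lemma grad_meas:
  fixes l :: "'a::real_inner \<Rightarrow> 'z \<Rightarrow> real"
  assumes d: "\<And>x z. GDERIV (\<lambda>x. l x z) x :> gradl x z"
    and li: "\<And>x. integrable \<mu> (\<lambda>z. l x z)"
  shows "(\<lambda>z. inner (gradl y z) v) \<in> borel_measurable \<mu>"
proof (rule borel_measurable_LIMSEQ_real)
  fix z
  have D: "((\<lambda>s. l (y + s *\<^sub>R v) z) has_real_derivative (inner (gradl y z) v)) (at 0)"
    using line_deriv[of "\<lambda>x. l x z" y 0 v "gradl y z"] d by simp
  hence lim: "((\<lambda>s. (l (y + s *\<^sub>R v) z - l (y + 0 *\<^sub>R v) z) / (s - 0)) \<longlongrightarrow> inner (gradl y z) v) (at 0)"
    by (simp add: has_field_derivative_iff)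
  have f: "filterlim (\<lambda>i. inverse (real (Suc i))) (at 0) sequentially"
    unfolding filterlim_at using LIMSEQ_inverse_real_of_nat by auto
  show "(\<lambda>i. (l (y + inverse (real (Suc i)) *\<^sub>R v) z - l y z) / inverse (real (Suc i))) \<longlonglongrightarrow> inner (gradl y z) v"
    using filterlim_compose[OF lim f] by simp
next
  fix i
  show "(\<lambda>z. (l (y + inverse (real (Suc i)) *\<^sub>R v) z - l y z) / inverse (real (Suc i))) \<in> borel_measurable \<mu>"
    using li by (intro borel_measurable_divide borel_measurable_diff borel_measurable_integrable) auto
qed

lemma F_bounds:
  fixes l :: "real^'n \<Rightarrow> 'z \<Rightarrow> real" and gradl :: "real^'n \<Rightarrow> 'z \<Rightarrow> real^'n"
  assumes P: "prob_space \<mu>"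
    and d: "\<And>x z. GDERIV (\<lambda>x. l x z) x :> gradl x z"
    and li: "\<And>x. integrable \<mu> (\<lambda>z. l x z)"
    and AEZ: "AE z in \<mu>. z \<in> Z"
    and PL: "\<And>z y v. z \<in> Z \<Longrightarrow> l y z + inner (gradl y z) v + \<gamma> / 2 * (norm v)\<^sup>2 \<le> l (y + v) z"
    and PU: "\<And>z y v. z \<in> Z \<Longrightarrow> l (y + v) z \<le> l y z + inner (gradl y z) v + \<beta> / 2 * (norm v)\<^sup>2"
  shows "\<exists>\<Gamma>. \<forall>y v. (\<integral>z. l y z \<partial>\<mu>) + inner (\<Gamma> y) v + \<gamma> / 2 * (norm v)\<^sup>2 \<le> (\<integral>z. l (y + v) z \<partial>\<mu>)
              \<and> (\<integral>z. l (y + v) z \<partial>\<mu>) \<le> (\<integral>z. l y z \<partial>\<mu>) + inner (\<Gamma> y) v + \<beta> / 2 * (norm v)\<^sup>2"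
proof -
  interpret prob_space \<mu> by (rule P)
  have gi: "integrable \<mu> (\<lambda>z. inner (gradl y z) v)" for y v
  proof (rule Bochner_Integration.integrable_bound)
    show "integrable \<mu> (\<lambda>z. \<bar>l (y + v) z - l y z\<bar> + (\<bar>\<beta>\<bar> + \<bar>\<gamma>\<bar>) * (norm v)\<^sup>2)"
      using li by (intro Bochner_Integration.integrable_add integrable_abs Bochner_Integration.integrable_diff) auto
    show "(\<lambda>z. inner (gradl y z) v) \<in> borel_measurable \<mu>" by (rule grad_meas[OF d li])
    show "AE z in \<mu>. norm (inner (gradl y z) v) \<le> norm (\<bar>l (y + v) z - l y z\<bar> + (\<bar>\<beta>\<bar> + \<bar>\<gamma>\<bar>) * (norm v)\<^sup>2)"
      using AEZ
    proof (rule AE_mp, intro AE_I2 impI)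
      fix z assume z: "z \<in> Z"
      have n: "0 \<le> (norm v)\<^sup>2" by simp
      have a: "\<beta> / 2 * (norm v)\<^sup>2 \<le> (\<bar>\<beta>\<bar> + \<bar>\<gamma>\<bar>) * (norm v)\<^sup>2"
        by (intro mult_right_mono n) auto
      have b: "- (\<gamma> / 2 * (norm v)\<^sup>2) \<le> (\<bar>\<beta>\<bar> + \<bar>\<gamma>\<bar>) * (norm v)\<^sup>2"
        using mult_right_mono[OF _ n, of "-\<gamma>/2" "\<bar>\<beta>\<bar> + \<bar>\<gamma>\<bar>"] by auto
      show "norm (inner (gradl y z) v) \<le> norm (\<bar>l (y + v) z - l y z\<bar> + (\<bar>\<beta>\<bar> + \<bar>\<gamma>\<bar>) * (norm v)\<^sup>2)"
      proof -
        have C: "0 \<le> (\<bar>\<beta>\<bar> + \<bar>\<gamma>\<bar>) * (norm v)\<^sup>2" using n by simp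
        have 1: "inner (gradl y z) v \<le> \<bar>l (y + v) z - l y z\<bar> + (\<bar>\<beta>\<bar> + \<bar>\<gamma>\<bar>) * (norm v)\<^sup>2"
          using PL[OF z, of y v] b by linarith
        have 2: "- inner (gradl y z) v \<le> \<bar>l (y + v) z - l y z\<bar> + (\<bar>\<beta>\<bar> + \<bar>\<gamma>\<bar>) * (norm v)\<^sup>2"
          using PU[OF z, of y v] a by linarith
        show ?thesis using 1 2 C by (simp only: real_norm_def) linarith
      qed
    qed
  qed
  define \<Gamma> where "\<Gamma> y = (\<chi> i. \<integral>z. gradl y z $ i \<partial>\<mu>)" for y
  have GI: "(\<integral>z. inner (gradl y z) v \<partial>\<mu>) = inner (\<Gamma> y) v" for y v
  proof -
    have ci: "integrable \<mu> (\<lambda>z. gradl y z $ i)" for i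
      using gi[of y "axis i 1"] by (simp add: inner_axis)
    have "(\<integral>z. inner (gradl y z) v \<partial>\<mu>) = (\<integral>z. (\<Sum>i\<in>UNIV. gradl y z $ i * v $ i) \<partial>\<mu>)"
      by (simp add: inner_vec_def)
    also have "\<dots> = (\<Sum>i\<in>UNIV. (\<integral>z. gradl y z $ i \<partial>\<mu>) * v $ i)"
    proof -
      have "(\<integral>z. (\<Sum>i\<in>UNIV. gradl y z $ i * v $ i) \<partial>\<mu>) = (\<Sum>i\<in>UNIV. (\<integral>z. gradl y z $ i * v $ i \<partial>\<mu>))"
        using Bochner_Integration.integral_sum[where I=UNIV and M=\<mu> and f="\<lambda>i z. gradl y z $ i * v $ i"] ci by auto
      also have "\<dots> = (\<Sum>i\<in>UNIV. (\<integral>z. gradl y z $ i \<partial>\<mu>) * v $ i)"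
        by (intro sum.cong refl integral_mult_left_zero)
      finally show ?thesis .
    qed
    also have "\<dots> = inner (\<Gamma> y) v" by (simp add: \<Gamma>_def inner_vec_def)
    finally show ?thesis .
  qed
  show ?thesis
  proof (intro exI[of _ \<Gamma>] allI conjI)
    fix y v
    have "(\<integral>z. l y z \<partial>\<mu>) + inner (\<Gamma> y) v + \<gamma> / 2 * (norm v)\<^sup>2 = (\<integral>z. l y z + inner (gradl y z) v + \<gamma> / 2 * (norm v)\<^sup>2 \<partial>\<mu>)"
      using li gi GI by (simp add: prob_space)
    also have "\<dots> \<le> (\<integral>z. l (y + v) z \<partial>\<mu>)"
      using li gi AEZ PL by (intro integral_mono_AE) auto
    finally show "(\<integral>z. l y z \<partial>\<mu>) + inner (\<Gamma> y) v + \<gamma> / 2 * (norm v)\<^sup>2 \<le> (\<integral>z. l (y + v) z \<partial>\<mu>)" .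
    have "(\<integral>z. l (y + v) z \<partial>\<mu>) \<le> (\<integral>z. l y z + inner (gradl y z) v + \<beta> / 2 * (norm v)\<^sup>2 \<partial>\<mu>)"
      using li gi AEZ PU by (intro integral_mono_AE) auto
    also have "\<dots> = (\<integral>z. l y z \<partial>\<mu>) + inner (\<Gamma> y) v + \<beta> / 2 * (norm v)\<^sup>2"
      using li gi GI by (simp add: prob_space)
    finally show "(\<integral>z. l (y + v) z \<partial>\<mu>) \<le> (\<integral>z. l y z \<partial>\<mu>) + inner (\<Gamma> y) v + \<beta> / 2 * (norm v)\<^sup>2" .
  qed
qed

locale Fq =
  fixes F :: "real^'n \<Rightarrow> real" and \<Gamma> :: "real^'n \<Rightarrow> real^'n" and \<gamma> \<beta> :: real
  assumes FL: "\<And>y v. F y + inner (\<Gamma> y) v + \<gamma> / 2 * (norm v)\<^sup>2 \<le> F (y + v)"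
    and FU: "\<And>y v. F (y + v) \<le> F y + inner (\<Gamma> y) v + \<beta> / 2 * (norm v)\<^sup>2"
    and gpos: "\<gamma> > 0" and bpos: "\<beta> > 0"
begin

lemma FL': "F y + inner (\<Gamma> y) (u - y) + \<gamma> / 2 * (norm (u - y))\<^sup>2 \<le> F u"
  using FL[of y "u - y"] by simp

lemma FU': "F u \<le> F y + inner (\<Gamma> y) (u - y) + \<beta> / 2 * (norm (u - y))\<^sup>2"
  using FU[of y "u - y"] by simp

lemma FL0: "F y + inner (\<Gamma> y) (u - y) \<le> F u"
proof -
  have "0 \<le> \<gamma> / 2 * (norm (u - y))\<^sup>2" using gpos by simp
  then show ?thesis using FL'[of y u] by linarith
qed

lemma F_convex: "convex_on UNIV F"
proof (rule convex_onI)
  fix t :: real and a b :: "real^'n" assume t: "0 < t" "t < 1"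
  define w where "w = (1 - t) *\<^sub>R a + t *\<^sub>R b"
  have 1: "F w + inner (\<Gamma> w) (a - w) \<le> F a"
    by (rule FL0)
  have 2: "F w + inner (\<Gamma> w) (b - w) \<le> F b"
    by (rule FL0)
  have z: "(1 - t) *\<^sub>R (a - w) + t *\<^sub>R (b - w) = 0"
    by (simp add: w_def algebra_simps)
  have "(1 - t) * inner (\<Gamma> w) (a - w) + t * inner (\<Gamma> w) (b - w) = inner (\<Gamma> w) ((1 - t) *\<^sub>R (a - w) + t *\<^sub>R (b - w))"
    by (simp add: inner_add_right)
  also have "\<dots> = 0" using z by simp
  finally have 3: "(1 - t) * inner (\<Gamma> w) (a - w) + t * inner (\<Gamma> w) (b - w) = 0" .
  have "(1 - t) * (F w + inner (\<Gamma> w) (a - w)) + t * (F w + inner (\<Gamma> w) (b - w)) \<le> (1 - t) * F a + t * F b"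
    using t 1 2 by (intro add_mono mult_left_mono) auto
  then show "F ((1 - t) *\<^sub>R a + t *\<^sub>R b) \<le> (1 - t) * F a + t * F b"
    using 3 unfolding w_def[symmetric] by (simp add: algebra_simps)
qed simp

lemma F_cont: "continuous_on UNIV F"
  by (rule convex_on_continuous[OF open_UNIV F_convex])

lemma cocoercive: "F x + inner (\<Gamma> x) (y - x) + (norm (\<Gamma> y - \<Gamma> x))\<^sup>2 / (2 * \<beta>) \<le> F y"
proof -
  define g where "g = \<Gamma> y - \<Gamma> x"
  define w where "w = y - (1 / \<beta>) *\<^sub>R g"
  have 1: "F x + inner (\<Gamma> x) (w - x) \<le> F w"
    by (rule FL0)
  have 2: "F w \<le> F y + inner (\<Gamma> y) (w - y) + \<beta> / 2 * (norm (w - y))\<^sup>2"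
    by (rule FU')
  have a: "inner (\<Gamma> x) (w - x) = inner (\<Gamma> x) (y - x) - inner (\<Gamma> x) g / \<beta>"
    by (simp add: w_def inner_diff_right algebra_simps)
  have b: "inner (\<Gamma> y) (w - y) = - inner (\<Gamma> y) g / \<beta>"
    by (simp add: w_def)
  have c: "\<beta> / 2 * (norm (w - y))\<^sup>2 = (norm g)\<^sup>2 / (2 * \<beta>)"
    using bpos by (simp add: w_def power2_eq_square field_simps)
  have d: "inner (\<Gamma> y) g / \<beta> - inner (\<Gamma> x) g / \<beta> = (norm g)\<^sup>2 / \<beta>"
    using bpos by (simp add: g_def power2_norm_eq_inner inner_diff_left field_simps)
  have e: "(norm g)\<^sup>2 / \<beta> = 2 * ((norm g)\<^sup>2 / (2 * \<beta>))" by simp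
  show ?thesis using 1 2 a b c d e unfolding g_def[symmetric] by linarith
qed

lemma cocoercive2: "(norm (\<Gamma> y - \<Gamma> x))\<^sup>2 \<le> \<beta> * inner (\<Gamma> y - \<Gamma> x) (y - x)"
proof -
  have 1: "F x + inner (\<Gamma> x) (y - x) + (norm (\<Gamma> y - \<Gamma> x))\<^sup>2 / (2 * \<beta>) \<le> F y" by (rule cocoercive)
  have 2: "F y + inner (\<Gamma> y) (x - y) + (norm (\<Gamma> x - \<Gamma> y))\<^sup>2 / (2 * \<beta>) \<le> F x" by (rule cocoercive)
  have n: "norm (\<Gamma> x - \<Gamma> y) = norm (\<Gamma> y - \<Gamma> x)" by (rule norm_minus_commute)
  have i: "inner (\<Gamma> y) (x - y) = - inner (\<Gamma> y) (y - x)" by (simp add: inner_diff_right)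
  have "(norm (\<Gamma> y - \<Gamma> x))\<^sup>2 / \<beta> \<le> inner (\<Gamma> y - \<Gamma> x) (y - x)"
    using 1 2 n i by (simp add: inner_diff_left) 
  then show ?thesis using bpos by (simp add: divide_le_eq mult.commute)
qed

lemma strong_mono: "\<gamma> * (norm (y - x))\<^sup>2 \<le> inner (\<Gamma> y - \<Gamma> x) (y - x)"
proof -
  have 1: "F x + inner (\<Gamma> x) (y - x) + \<gamma> / 2 * (norm (y - x))\<^sup>2 \<le> F y" by (rule FL')
  have 2: "F y + inner (\<Gamma> y) (x - y) + \<gamma> / 2 * (norm (x - y))\<^sup>2 \<le> F x" by (rule FL')
  have n: "norm (x - y) = norm (y - x)" by (rule norm_minus_commute)
  have i: "inner (\<Gamma> y) (x - y) = - inner (\<Gamma> y) (y - x)" by (simp add: inner_diff_right)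
  show ?thesis using 1 2 n i by (simp add: inner_diff_left)
qed

end

context Fq begin

lemma min_exists:
  assumes K: "closed K" "K \<noteq> {}"
  shows "\<exists>x\<in>K. \<forall>u\<in>K. F x \<le> F u"
proof -
  obtain y0 where y0: "y0 \<in> K" using K by auto
  define R where "R = 2 * norm (\<Gamma> y0) / \<gamma> + 1"
  have Rpos: "R > 0" unfolding R_def using gpos by (simp add: add_nonneg_pos)
  have cK: "compact (K \<inter> cball y0 R)"
    using K(1) by (intro closed_Int_compact compact_cball)
  have neK: "K \<inter> cball y0 R \<noteq> {}" using y0 Rpos by auto
  obtain x where x: "x \<in> K \<inter> cball y0 R" "\<forall>u\<in>K \<inter> cball y0 R. F x \<le> F u"
    using continuous_attains_inf[OF cK neK continuous_on_subset[OF F_cont subset_UNIV]] by blast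
  have far: "F y0 < F u" if u: "u \<notin> cball y0 R" for u
  proof -
    define r where "r = norm (u - y0)"
    have rR: "r > R" using u by (simp add: r_def dist_norm norm_minus_commute)
    have "inner (\<Gamma> y0) (u - y0) \<ge> - (norm (\<Gamma> y0) * r)"
      unfolding r_def using Cauchy_Schwarz_ineq2[of "\<Gamma> y0" "u - y0"] by linarith
    moreover have "norm (\<Gamma> y0) * r < \<gamma> / 2 * r\<^sup>2"
    proof -
      have "2 * norm (\<Gamma> y0) / \<gamma> < r" using rR R_def by simp
      hence "2 * norm (\<Gamma> y0) < \<gamma> * r" using gpos by (simp add: divide_less_eq mult.commute)
      hence "norm (\<Gamma> y0) * r < (\<gamma> * r / 2) * r"
        using rR Rpos by (intro mult_strict_right_mono) auto
      thus ?thesis by (simp add: power2_eq_square algebra_simps)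
    qed
    ultimately show ?thesis using FL'[of y0 u] unfolding r_def by linarith
  qed
  have "\<forall>u\<in>K. F x \<le> F u"
  proof
    fix u assume "u \<in> K"
    show "F x \<le> F u"
    proof (cases "u \<in> cball y0 R")
      case True thus ?thesis using x \<open>u \<in> K\<close> by auto
    next
      case False
      have "y0 \<in> K \<inter> cball y0 R" using y0 Rpos by auto
      hence "F x \<le> F y0" using x(2) by blast
      thus ?thesis using far[OF False] by linarith
    qed
  qed
  thus ?thesis using x by blast
qed

lemma optimality:
  assumes K: "convex K" and x: "x \<in> K" "\<forall>u\<in>K. F x \<le> F u" and u: "u \<in> K"
  shows "inner (\<Gamma> x) (u - x) \<ge> 0"
proof -
  have ev: "eventually (\<lambda>t. - (\<beta> / 2 * t * (norm (u - x))\<^sup>2) \<le> inner (\<Gamma> x) (u - x)) (at_right (0::real))"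
  proof (rule eventually_at_rightI[of 0 1])
    fix t :: real assume "t \<in> {0<..<1}"
    hence t: "0 < t" "t < 1" by auto
    have "x + t *\<^sub>R (u - x) = (1 - t) *\<^sub>R x + t *\<^sub>R u" by (simp add: algebra_simps)
    also have "\<dots> \<in> K" using K x(1) u t by (intro convexD) auto
    finally have "F x \<le> F (x + t *\<^sub>R (u - x))" using x(2) by blast
    also have "\<dots> \<le> F x + inner (\<Gamma> x) (t *\<^sub>R (u - x)) + \<beta> / 2 * (norm (t *\<^sub>R (u - x)))\<^sup>2"
      by (rule FU)
    finally have c: "F x \<le> F x + inner (\<Gamma> x) (t *\<^sub>R (u - x)) + \<beta> / 2 * (norm (t *\<^sub>R (u - x)))\<^sup>2" .
    have n: "(norm (t *\<^sub>R (u - x)))\<^sup>2 = t\<^sup>2 * (norm (u - x))\<^sup>2" using t by (simp add: power_mult_distrib)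
    have i: "inner (\<Gamma> x) (t *\<^sub>R (u - x)) = t * inner (\<Gamma> x) (u - x)" by simp
    have "0 \<le> t * inner (\<Gamma> x) (u - x) + \<beta> / 2 * (t\<^sup>2 * (norm (u - x))\<^sup>2)"
      using c unfolding n i by linarith
    also have "\<dots> = t * (inner (\<Gamma> x) (u - x) + \<beta> / 2 * t * (norm (u - x))\<^sup>2)"
      by (simp add: power2_eq_square algebra_simps)
    finally have "0 \<le> t * (inner (\<Gamma> x) (u - x) + \<beta> / 2 * t * (norm (u - x))\<^sup>2)" .
    hence "0 \<le> inner (\<Gamma> x) (u - x) + \<beta> / 2 * t * (norm (u - x))\<^sup>2"
      using t by (simp add: zero_le_mult_iff)
    thus "- (\<beta> / 2 * t * (norm (u - x))\<^sup>2) \<le> inner (\<Gamma> x) (u - x)" by linarith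
  qed simp
  have lim: "((\<lambda>t. - (\<beta> / 2 * t * (norm (u - x))\<^sup>2)) \<longlongrightarrow> - (\<beta> / 2 * 0 * (norm (u - x))\<^sup>2)) (at_right 0)"
    by (intro tendsto_intros)
  have "- (\<beta> / 2 * 0 * (norm (u - x))\<^sup>2) \<le> inner (\<Gamma> x) (u - x)"
    by (rule tendsto_le[OF trivial_limit_at_right_real tendsto_const lim ev])
  thus ?thesis by simp
qed

lemma argmin_props:
  assumes K: "closed K" "convex K" "K \<noteq> {}"
  defines "x \<equiv> arg_min F (\<lambda>y. y \<in> K)"
  shows "x \<in> K" "\<forall>u\<in>K. F x \<le> F u" "\<forall>u\<in>K. inner (\<Gamma> x) (u - x) \<ge> 0"
proof -
  obtain x0 where x0: "x0 \<in> K" "\<forall>u\<in>K. F x0 \<le> F u" using min_exists[OF K(1,3)] by blast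
  have "is_arg_min F (\<lambda>y. y \<in> K) x0" using x0 unfolding is_arg_min_def by (auto simp: not_less)
  hence "is_arg_min F (\<lambda>y. y \<in> K) x" unfolding x_def arg_min_def by (rule someI)
  thus xK: "x \<in> K" and xm: "\<forall>u\<in>K. F x \<le> F u" unfolding is_arg_min_def by (auto simp: not_less)
  show "\<forall>u\<in>K. inner (\<Gamma> x) (u - x) \<ge> 0" using optimality[OF K(2) xK xm] by blast
qed

lemma sensitivity:
  assumes o1: "\<forall>u\<in>K. inner (\<Gamma> x) (u - x) \<ge> 0" and o2: "\<forall>u\<in>K'. inner (\<Gamma> x') (u - x') \<ge> 0"
    and m1: "x' - d \<in> K" and m2: "x + d \<in> K'"
  shows "norm (x' - x) \<le> sqrt (\<beta> / \<gamma>) * norm d"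
proof -
  define e where "e = x' - x"
  define g where "g = \<Gamma> x' - \<Gamma> x"
  have "x' - d - x = e - d" by (simp add: e_def)
  hence 1: "inner (\<Gamma> x) (e - d) \<ge> 0" using o1 m1 by metis
  have "x + d - x' = d - e" by (simp add: e_def)
  hence 2: "inner (\<Gamma> x') (d - e) \<ge> 0" using o2 m2 by metis
  have "inner g e \<le> inner g d"
    using 1 2 unfolding g_def by (simp add: inner_diff_left inner_diff_right)
  also have "\<dots> \<le> norm g * norm d" by (rule norm_cauchy_schwarz)
  finally have ge: "inner g e \<le> norm g * norm d" .
  have cc: "(norm g)\<^sup>2 \<le> \<beta> * inner g e" unfolding g_def e_def by (rule cocoercive2)
  have sm: "\<gamma> * (norm e)\<^sup>2 \<le> inner g e" unfolding g_def e_def by (rule strong_mono)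
  have gd: "norm g \<le> \<beta> * norm d"
  proof (cases "norm g = 0")
    case True thus ?thesis using bpos by simp
  next
    case False
    have "norm g * norm g \<le> \<beta> * (norm g * norm d)"
      using cc ge bpos by (simp add: power2_eq_square) (smt (verit) mult_left_mono)
    hence "norm g * norm g \<le> (\<beta> * norm d) * norm g" by (simp add: algebra_simps)
    thus ?thesis using False by (simp add: mult_le_cancel_right)
  qed
  have "\<gamma> * (norm e)\<^sup>2 \<le> \<beta> * (norm d)\<^sup>2"
  proof -
    have "\<gamma> * (norm e)\<^sup>2 \<le> norm g * norm d" using sm ge by linarith
    also have "\<dots> \<le> \<beta> * norm d * norm d" using gd by (simp add: mult_right_mono)
    finally show ?thesis by (simp add: power2_eq_square)
  qed
  hence "(norm e)\<^sup>2 \<le> (\<beta> / \<gamma>) * (norm d)\<^sup>2" using gpos by (simp add: field_simps)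
  hence "sqrt ((norm e)\<^sup>2) \<le> sqrt ((\<beta> / \<gamma>) * (norm d)\<^sup>2)" by (rule real_sqrt_le_mono)
  also have "\<dots> = sqrt (\<beta> / \<gamma>) * norm d" by (simp only: real_sqrt_mult real_sqrt_abs) simp
  finally show ?thesis unfolding e_def by simp
qed

end

lemma inner_mat: "inner w (M *v y) = inner (transpose M *v w) (y::real^_)"
  by (simp add: dot_lmul_matrix)

declare transpose_matrix_vector[simp del]

lemma quad_pos_def:
  fixes G :: "real^'n^'m"
  assumes A4: "rank G = CARD('m)" and w: "w \<noteq> 0"
  shows "transpose G *v w \<noteq> 0"
proof -
  have "rank (transpose G) = CARD('m)" using A4 by (simp add: rank_transpose)
  hence "inj ((*v) (transpose G))" by (simp add: full_rank_injective)
  thus ?thesis using w by (metis injD matrix_vector_mult_0_right)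
qed

lemma min_norm_preimage:
  fixes G :: "real^'n^'m"
  assumes A4: "rank G = CARD('m)"
  shows "lambda_min (G ** transpose G) > 0 \<and>
         (\<forall>u. \<exists>d. G *v d = u \<and> norm d \<le> norm u / sqrt (lambda_min (G ** transpose G)))"
proof -
  define A where "A = G ** transpose G"
  define q where "q w = (norm (transpose G *v w))\<^sup>2" for w :: "real^'m"
  have Aw: "A *v w = G *v (transpose G *v w)" for w by (simp add: A_def matrix_vector_mul_assoc)
  have sym: "inner x (A *v y) = inner (transpose G *v x) (transpose G *v y)" for x y
    unfolding Aw by (rule inner_mat)
  have qA: "q w = inner w (A *v w)" for w by (simp add: sym q_def power2_norm_eq_inner)
  have S1: "compact (sphere (0::real^'m) 1)" by simp
  have "axis undefined 1 \<in> sphere (0::real^'m) 1" by simp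
  hence S2: "sphere (0::real^'m) 1 \<noteq> {}" by blast
  note S = S1 S2
  have cq: "continuous_on (sphere 0 1) q" unfolding q_def by (intro continuous_intros)
  obtain w0 where w0: "w0 \<in> sphere 0 1" "\<forall>w\<in>sphere 0 1. q w0 \<le> q w"
    using continuous_attains_inf[OF S cq] by blast
  define \<mu> where "\<mu> = q w0"
  have nw0: "norm w0 = 1" using w0 by simp
  have w0nz: "w0 \<noteq> 0" using nw0 by auto
  have mupos: "\<mu> > 0" unfolding \<mu>_def q_def using quad_pos_def[OF A4 w0nz] by simp
  have qhom: "q (c *\<^sub>R w) = c\<^sup>2 * q w" for c w
    by (simp add: q_def matrix_vector_mult_scaleR power_mult_distrib)
  have qge: "\<mu> * (norm w)\<^sup>2 \<le> q w" for w
  proof (cases "w = 0")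
    case True thus ?thesis by (simp add: q_def)
  next
    case False
    hence "(1 / norm w) *\<^sub>R w \<in> sphere 0 1" by simp
    hence "\<mu> \<le> (1 / norm w)\<^sup>2 * q w" unfolding \<mu>_def using w0 qhom by metis
    thus ?thesis using False by (simp add: field_simps power2_eq_square)
  qed
  have eig: "A *v w0 = \<mu> *\<^sub>R w0"
  proof -
    define r where "r = A *v w0 - \<mu> *\<^sub>R w0"
    define c where "c = inner r r"
    define k where "k = q r - \<mu> * (norm r)\<^sup>2"
    have k0: "k \<ge> 0" using qge[of r] by (simp add: k_def)
    have expand: "q (w0 + t *\<^sub>R r) - \<mu> * (norm (w0 + t *\<^sub>R r))\<^sup>2 = 2 * t * c + t\<^sup>2 * k" for t
    proof -
      have "q (w0 + t *\<^sub>R r) = q w0 + 2 * t * inner (A *v w0) r + t\<^sup>2 * q r"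
        unfolding qA by (simp add: algebra_simps inner_add_left inner_add_right sym inner_commute power2_eq_square)
      moreover have "(norm (w0 + t *\<^sub>R r))\<^sup>2 = 1 + 2 * t * inner w0 r + t\<^sup>2 * (norm r)\<^sup>2"
      proof -
        have a: "inner w0 (t *\<^sub>R r) = ((norm (w0 + t *\<^sub>R r))\<^sup>2 - (norm w0)\<^sup>2 - (norm (t *\<^sub>R r))\<^sup>2) / 2"
          by (rule dot_norm)
        have b: "(norm (t *\<^sub>R r))\<^sup>2 = t\<^sup>2 * (norm r)\<^sup>2" by (simp add: power_mult_distrib)
        have c: "inner w0 (t *\<^sub>R r) = t * inner w0 r" by simp
        show ?thesis using a b c nw0 by simp
      qed
      moreover have "inner (A *v w0) r = c + q w0 * inner w0 r"
        by (simp add: c_def r_def inner_diff_left \<mu>_def)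
      ultimately show ?thesis unfolding k_def \<mu>_def by (simp add: algebra_simps power2_eq_square)
    qed
    have pos: "0 \<le> 2 * t * c + t\<^sup>2 * k" for t using qge[of "w0 + t *\<^sub>R r"] expand[of t] by linarith
    have "c = 0"
    proof (rule ccontr)
      assume "c \<noteq> 0"
      hence cp: "c > 0" by (simp add: c_def)
      define t where "t = - c / (k + 1)"
      have kp: "k + 1 > 0" using k0 by simp
      have a: "2 * t * c = - 2 * (c\<^sup>2 / (k + 1))" by (simp add: t_def power2_eq_square)
      have b: "t\<^sup>2 * k = c\<^sup>2 / (k + 1) * (k / (k + 1))"
        by (simp add: t_def power2_eq_square power_divide)
      have c1: "k / (k + 1) \<le> 1" using kp by simp
      have c2: "c\<^sup>2 / (k + 1) > 0" using kp cp by simp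
      have "t\<^sup>2 * k \<le> c\<^sup>2 / (k + 1)" unfolding b using mult_left_mono[OF c1 less_imp_le[OF c2]] by simp
      hence "2 * t * c + t\<^sup>2 * k < 0" using a c2 by linarith
      thus False using pos[of t] by linarith
    qed
    thus ?thesis by (simp add: c_def r_def)
  qed
  define E where "E = {e. \<exists>v. v \<noteq> 0 \<and> A *v v = e *\<^sub>R v}"
  have muE: "\<mu> \<in> E" unfolding E_def using eig w0nz by blast
  have Ege: "\<mu> \<le> e" if eE: "e \<in> E" for e
  proof -
    obtain v where v: "v \<noteq> 0" "A *v v = e *\<^sub>R v" using eE by (auto simp: E_def)
    have "e * (norm v)\<^sup>2 = q v" using v by (simp add: qA power2_norm_eq_inner)
    hence "\<mu> * (norm v)\<^sup>2 \<le> e * (norm v)\<^sup>2" using qge[of v] by simp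
    thus ?thesis using v by simp
  qed
  have symA: "inner (A *v x) y = inner x (A *v y)" for x y
    using sym[of x y] sym[of y x] by (simp add: inner_commute)
  define ev where "ev e = (SOME v. v \<noteq> 0 \<and> A *v v = e *\<^sub>R v)" for e
  have evp: "ev e \<noteq> 0 \<and> A *v ev e = e *\<^sub>R ev e" if "e \<in> E" for e
    using that unfolding E_def ev_def by (metis (mono_tags, lifting) mem_Collect_eq someI)
  have inj: "inj_on ev E"
  proof (rule inj_onI)
    fix a b assume ab: "a \<in> E" "b \<in> E" "ev a = ev b"
    hence "a *\<^sub>R ev a = b *\<^sub>R ev a" using evp by metis
    thus "a = b" using evp[OF ab(1)] by (simp add: scaleR_cancel_right)
  qed
  have orth: "inner (ev a) (ev b) = 0" if "a \<in> E" "b \<in> E" "a \<noteq> b" for a b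
  proof -
    have "a * inner (ev a) (ev b) = inner (A *v ev a) (ev b)" using evp[OF that(1)] by simp
    also have "\<dots> = inner (ev a) (A *v ev b)" by (rule symA)
    also have "\<dots> = b * inner (ev a) (ev b)" using evp[OF that(2)] by simp
    finally show ?thesis using that(3) by simp
  qed
  have "pairwise orthogonal (ev ` E)"
    unfolding pairwise_def orthogonal_def using orth by (metis imageE)
  moreover have "0 \<notin> ev ` E" using evp by auto
  ultimately have "independent (ev ` E)" by (rule pairwise_orthogonal_independent)
  hence "finite (ev ` E)" using independent_bound by blast
  hence finE: "finite E" using finite_image_iff[OF inj] by simp
  have lm: "lambda_min A = \<mu>"
    unfolding lambda_min_def E_def[symmetric] using finE muE Ege by (intro Min_eqI) auto
  have Ainj: "inj ((*v) A)"
  proof -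
    have "A *v w = 0 \<Longrightarrow> w = 0" for w
    proof -
      assume "A *v w = 0"
      hence "\<mu> * (norm w)\<^sup>2 \<le> 0" using qge[of w] by (simp add: qA)
      hence "(norm w)\<^sup>2 \<le> 0" using mupos by (simp add: mult_le_0_iff)
      thus "w = 0" by simp
    qed
    thus ?thesis by (metis (no_types) inj_on_def matrix_vector_mult_diff_distrib eq_iff_diff_eq_0)
  qed
  hence "surj ((*v) A)" by (simp add: full_rank_injective[symmetric] full_rank_surjective)
  have main: "\<exists>d. G *v d = u \<and> norm d \<le> norm u / sqrt \<mu>" for u
  proof -
    obtain w where w: "A *v w = u" using \<open>surj ((*v) A)\<close> by (metis surjD)
    define d where "d = transpose G *v w"
    have Gd: "G *v d = u" using w by (simp add: d_def Aw)
    have nd: "(norm d)\<^sup>2 = inner w u" using w sym[of w w] by (simp add: d_def power2_norm_eq_inner)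
    have "inner w u \<le> norm w * norm u" by (rule norm_cauchy_schwarz)
    have "\<mu> * (norm w)\<^sup>2 \<le> (norm d)\<^sup>2" using qge[of w] by (simp add: q_def d_def)
    hence "\<mu> * (norm w)\<^sup>2 \<le> norm w * norm u" using nd \<open>inner w u \<le> _\<close> by linarith
    hence wu: "\<mu> * norm w \<le> norm u"
      by (cases "w = 0") (auto simp: power2_eq_square mult_le_cancel_left)
    have "\<mu> * (norm d)\<^sup>2 \<le> (norm u)\<^sup>2"
    proof -
      have "\<mu> * (norm d)\<^sup>2 \<le> \<mu> * (norm w * norm u)" using nd \<open>inner w u \<le> _\<close> mupos by simp
      also have "\<dots> = (\<mu> * norm w) * norm u" by simp
      also have "\<dots> \<le> norm u * norm u" using wu by (simp add: mult_right_mono)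
      finally show ?thesis by (simp add: power2_eq_square)
    qed
    hence "(norm d)\<^sup>2 \<le> (norm u / sqrt \<mu>)\<^sup>2" using mupos by (simp add: power_divide field_simps)
    hence "norm d \<le> norm u / sqrt \<mu>" by (rule power2_le_imp_le) (use mupos in simp)
    thus ?thesis using Gd by blast
  qed
  show ?thesis using main mupos lm unfolding A_def by simp
qed

theorem corollary1:
  fixes G :: "real^'n^'m"
    and l :: "real^'n \<Rightarrow> 'z::euclidean_space \<Rightarrow> real"
    and gradl :: "real^'n \<Rightarrow> 'z \<Rightarrow> real^'n"
    and Z :: "'z set" and W :: "(real^'m) set"
    and D :: "real^'n \<Rightarrow> 'z measure"
    and Dg :: "real^'n \<Rightarrow> (real^'m) measure"
    and \<gamma> \<beta>z \<beta>x \<epsilon> \<epsilon>g :: real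
  assumes l_C2: "twice_cont_diff (\<lambda>p. l (fst p) (snd p))"
    and gradl: "\<And>x z. GDERIV (\<lambda>x. l x z) x :> gradl x z"
    and D_prob: "\<And>x. prob_space (D x)" and D_sets: "\<And>x. sets (D x) = sets borel"
    and D_supp: "\<And>x. AE z in D x. z \<in> Z"
    and Dg_prob: "\<And>x. prob_space (Dg x)" and Dg_sets: "\<And>x. sets (Dg x) = sets borel"
    and Dg_supp: "\<And>x. AE w in Dg x. w \<in> W"
    and l_int: "\<And>x x'. integrable (D x') (\<lambda>z. l x z)"
    and w_int: "\<And>x'. integrable (Dg x') (\<lambda>w. w)"
    and eps0: "\<epsilon> = 0"
    and gamma_pos: "\<gamma> > 0"
    and A1: "\<And>z. z \<in> Z \<Longrightarrow> strongly_convex_on UNIV \<gamma> (\<lambda>x. l x z)"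
    and A2z: "\<And>x z z'. z \<in> Z \<Longrightarrow> z' \<in> Z \<Longrightarrow> norm (gradl x z - gradl x z') \<le> \<beta>z * norm (z - z')"
    and A2x: "\<And>x y z. z \<in> Z \<Longrightarrow> norm (gradl x z - gradl y z) \<le> \<beta>x * norm (x - y)"
    and A3: "\<And>x y. W1 (D x) (D y) \<le> ennreal (\<epsilon> * norm (x - y))"
    and A3g: "\<And>x y. W1 (Dg x) (Dg y) \<le> ennreal (\<epsilon>g * norm (x - y))"
    and A4: "rank G = CARD('m)"
    and contr: "sqrt (\<beta>x / (\<gamma> * lambda_min (G ** transpose G))) * \<epsilon>g < 1"
  shows "(\<exists>!xs. constrained_equilibrium D l G Dg xs) \<and>
         (\<exists>q. 0 \<le> q \<and> q < 1 \<and>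
            (\<forall>xs x0. constrained_equilibrium D l G Dg xs \<longrightarrow>
               (\<exists>C. \<forall>t. norm (RCM D l G Dg x0 t - xs) \<le> C * q ^ t)))"
proof -
  \<comment> \<open>Z is nonempty\<close>
  obtain z0 where z0: "z0 \<in> Z"
  proof (cases "Z = {}")
    case True
    interpret P0: prob_space "D 0" by (rule D_prob)
    have "AE z in D 0. False" using D_supp[of 0] True by simp
    hence False using P0.AE_False by simp
    thus ?thesis ..
  qed blast
  have PL: "l y z + inner (gradl y z) v + \<gamma> / 2 * (norm v)\<^sup>2 \<le> l (y + v) z" if "z \<in> Z" for z y v
    using lower_quad[of "\<lambda>x. l x z" "\<lambda>x. gradl x z", OF gradl A1[OF that]] by simp
  have PU: "l (y + v) z \<le> l y z + inner (gradl y z) v + \<beta>x / 2 * (norm v)\<^sup>2" if "z \<in> Z" for z y v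
    using upper_quad[of "\<lambda>x. l x z" "\<lambda>x. gradl x z", OF gradl A2x[OF that]] by simp
  have bx: "\<gamma> \<le> \<beta>x"
  proof -
    define v :: "real^'n" where "v = axis undefined 1"
    have nv: "norm v = 1" by (simp add: v_def)
    show ?thesis using PL[OF z0, of 0 v] PU[OF z0, of 0 v] nv by simp
  qed
  define F where "F y = obj D l 0 y" for y
  obtain \<Gamma> where \<Gamma>: "\<forall>y v. F y + inner (\<Gamma> y) v + \<gamma> / 2 * (norm v)\<^sup>2 \<le> F (y + v)
              \<and> F (y + v) \<le> F y + inner (\<Gamma> y) v + \<beta>x / 2 * (norm v)\<^sup>2"
    using F_bounds[OF D_prob gradl l_int D_supp PL PU] unfolding F_def obj_def by blast
  interpret Fq F \<Gamma> \<gamma> \<beta>x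
    using \<Gamma> gamma_pos bx by unfold_locales auto
  \<comment> \<open>the objective does not depend on the decision up to a constant\<close>
  have shift: "obj D l x y = F y + (obj D l x 0 - F 0)" for x y
  proof -
    define h where "h z = l y z - l 0 z" for z
    define c where "c = max \<beta>z 0 * norm y + 1"
    have cpos: "0 < c" unfolding c_def by (simp add: add_nonneg_pos)
    have hL: "norm (h z - h z') \<le> c * dist z z'" if "z \<in> Z" "z' \<in> Z" for z z'
    proof -
      have "\<bar>(l y z - l 0 z) - (l y z' - l 0 z')\<bar> \<le> (\<beta>z * norm (z - z')) * norm (y - 0)"
        by (rule z_lip[OF gradl A2z[OF that]])
      also have "\<dots> \<le> (max \<beta>z 0 * norm (z - z')) * norm (y - 0)"
        by (intro mult_right_mono) auto
      also have "\<dots> \<le> c * dist z z'"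
        unfolding c_def dist_norm by (simp add: algebra_simps)
      finally show ?thesis by (simp add: h_def)
    qed
    have hi: "integrable (D w) h" for w unfolding h_def using l_int by auto
    have "ennreal (norm ((\<integral>z. h z \<partial>D x) - (\<integral>z. h z \<partial>D 0))) \<le> ennreal c * W1 (D x) (D 0)"
      by (rule W1_bound[OF hi hi D_supp D_supp cpos hL])
    also have "W1 (D x) (D 0) \<le> 0" using A3[of x 0] eps0 by simp
    hence "ennreal c * W1 (D x) (D 0) = 0" by simp
    finally have "(\<integral>z. h z \<partial>D x) = (\<integral>z. h z \<partial>D 0)" by simp
    thus ?thesis using l_int unfolding h_def F_def obj_def by simp
  qed
  have am: "arg_min (obj D l x) P = arg_min F P" for x P
  proof -
    obtain c where c: "obj D l x = (\<lambda>y. F y + c)" using shift[of x] by blast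
    have "is_arg_min (obj D l x) P = is_arg_min F P"
      unfolding is_arg_min_def c by (intro ext) simp
    thus ?thesis unfolding arg_min_def by simp
  qed
  \<comment> \<open>Lipschitz continuity of xi\<close>
  have xiL: "norm (xi Dg x - xi Dg y) \<le> max \<epsilon>g 0 * norm (x - y)" for x y
  proof -
    have "ennreal (norm ((\<integral>w. w \<partial>Dg x) - (\<integral>w. w \<partial>Dg y))) \<le> ennreal 1 * W1 (Dg x) (Dg y)"
      by (rule W1_bound[OF w_int w_int, where Z=UNIV]) (auto simp: dist_norm)
    also have "\<dots> \<le> ennreal (\<epsilon>g * norm (x - y))" using A3g[of x y] by simp
    finally have "ennreal (norm (xi Dg x - xi Dg y)) \<le> ennreal (\<epsilon>g * norm (x - y))"
      by (simp add: xi_def)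
    hence "norm (xi Dg x - xi Dg y) \<le> \<epsilon>g * norm (x - y) \<or> norm (xi Dg x - xi Dg y) \<le> 0"
      by (auto simp: ennreal_le_iff2)
    moreover have "\<epsilon>g * norm (x - y) \<le> max \<epsilon>g 0 * norm (x - y)" by (intro mult_right_mono) auto
    moreover have "0 \<le> max \<epsilon>g 0 * norm (x - y)" by simp
    ultimately show ?thesis by linarith
  qed
  \<comment> \<open>linear algebra\<close>
  define lam0 where "lam0 = lambda_min (G ** transpose G)"
  have lam: "lam0 > 0" "\<And>u. \<exists>d. G *v d = u \<and> norm d \<le> norm u / sqrt lam0"
    using min_norm_preimage[OF A4] unfolding lam0_def by blast+
  define K where "K b = {y. G *v y \<le> b}" for b
  have Kc: "closed (K b)" for b
  proof -
    have e: "K b = (\<lambda>y. G *v y) -` {x. \<forall>i. x $ i \<le> b $ i}" by (auto simp: K_def less_eq_vec_def)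
    have "closed ((\<lambda>y. G *v y) -` {x. \<forall>i. x $ i \<le> b $ i})"
      by (rule continuous_closed_vimage[OF closed_interval_left_cart matrix_vector_mult_linear_continuous_at])
    thus ?thesis unfolding e .
  qed
  have Kv: "convex (K b)" for b
  proof (rule convexI)
    fix x y :: "real^'n" and u v :: real
    assume xy: "x \<in> K b" "y \<in> K b" and uv: "0 \<le> u" "0 \<le> v" "u + v = 1"
    have "(G *v (u *\<^sub>R x + v *\<^sub>R y)) $ i \<le> b $ i" for i
    proof -
      have "(G *v (u *\<^sub>R x + v *\<^sub>R y)) $ i = u * (G *v x) $ i + v * (G *v y) $ i"
        by (simp add: matrix_vector_right_distrib matrix_vector_mult_scaleR)
      also have "\<dots> \<le> u * b $ i + v * b $ i"
        using xy uv by (intro add_mono mult_left_mono) (auto simp: K_def less_eq_vec_def)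
      also have "\<dots> = b $ i" using uv by (simp add: algebra_simps flip: distrib_right)
      finally show ?thesis .
    qed
    thus "u *\<^sub>R x + v *\<^sub>R y \<in> K b" by (simp add: K_def less_eq_vec_def)
  qed
  have Kne: "K b \<noteq> {}" for b
  proof -
    have "surj ((*v) G)" using A4 by (simp add: full_rank_surjective)
    then obtain y where "G *v y = b" by (metis surjD)
    thus ?thesis by (auto simp: K_def)
  qed
  define S where "S b = arg_min F (\<lambda>y. G *v y \<le> b)" for b
  have SK: "S b = arg_min F (\<lambda>y. y \<in> K b)" for b by (simp add: S_def K_def)
  have Sp: "S b \<in> K b" "\<forall>u\<in>K b. inner (\<Gamma> (S b)) (u - S b) \<ge> 0" for b
    using argmin_props[OF Kc Kv Kne, of b] unfolding SK by blast+
  define L where "L = sqrt (\<beta>x / (\<gamma> * lam0))"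
  have SL: "norm (S b' - S b) \<le> L * norm (b' - b)" for b b'
  proof -
    obtain d where d: "G *v d = b' - b" "norm d \<le> norm (b' - b) / sqrt lam0" using lam(2) by blast
    have m1: "S b' - d \<in> K b" using Sp(1)[of b'] d(1)
      by (auto simp: K_def less_eq_vec_def matrix_vector_mult_diff_distrib)
    have m2: "S b + d \<in> K b'" using Sp(1)[of b] d(1)
      by (auto simp: K_def less_eq_vec_def matrix_vector_right_distrib)
    have "norm (S b' - S b) \<le> sqrt (\<beta>x / \<gamma>) * norm d"
      by (rule sensitivity[OF Sp(2)[of b] Sp(2)[of b'] m1 m2])
    also have "\<dots> \<le> sqrt (\<beta>x / \<gamma>) * (norm (b' - b) / sqrt lam0)"
      using d(2) bx gamma_pos by (intro mult_left_mono) auto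
    also have "\<dots> = L * norm (b' - b)"
      unfolding L_def by (simp add: real_sqrt_divide real_sqrt_mult)
    finally show ?thesis .
  qed
  define T where "T x = S (xi Dg x)" for x
  define q where "q = L * max \<epsilon>g 0"
  have q0: "0 \<le> q" unfolding q_def L_def using bx gamma_pos lam(1) by (intro mult_nonneg_nonneg) auto
  have q1: "q < 1"
  proof (cases "\<epsilon>g \<ge> 0")
    case True thus ?thesis using contr unfolding q_def L_def lam0_def by simp
  next
    case False thus ?thesis unfolding q_def by simp
  qed
  have TL: "norm (T x - T y) \<le> q * norm (x - y)" for x y
  proof -
    have "norm (T x - T y) \<le> L * norm (xi Dg x - xi Dg y)" unfolding T_def by (rule SL)
    also have "\<dots> \<le> L * (max \<epsilon>g 0 * norm (x - y))"
      using xiL[of x y] bx gamma_pos lam(1) by (intro mult_left_mono) (auto simp: L_def)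
    finally show ?thesis by (simp add: q_def)
  qed
  have ce: "constrained_equilibrium D l G Dg xs \<longleftrightarrow> T xs = xs" for xs
    unfolding constrained_equilibrium_def am T_def S_def by auto
  have RS: "RCM D l G Dg x0 (Suc t) = T (RCM D l G Dg x0 t)" for x0 t
    by (simp add: Let_def am T_def S_def)
  have fix1: "\<exists>!x. T x = x"
    using banach_fix_type[OF q0 q1, of T] TL by (simp add: dist_norm)
  have conv: "norm (RCM D l G Dg x0 t - xs) \<le> norm (x0 - xs) * q ^ t" if "T xs = xs" for xs x0 t
  proof (induction t)
    case 0 thus ?case by simp
  next
    case (Suc t)
    have "norm (RCM D l G Dg x0 (Suc t) - xs) = norm (T (RCM D l G Dg x0 t) - T xs)"
      by (simp only: RS that)
    also have "\<dots> \<le> q * norm (RCM D l G Dg x0 t - xs)" by (rule TL)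
    also have "\<dots> \<le> q * (norm (x0 - xs) * q ^ t)" using Suc q0 by (intro mult_left_mono)
    finally show ?case by (simp add: algebra_simps)
  qed
  show ?thesis
    using fix1 conv q0 q1 unfolding ce by blast
qed

end
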